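(* Let $n\ge 2$ and let $\sigma_1\in G_n$ be the automorphism with $\sigma_1(y_1y_2)=-y_1y_2$ and $\sigma_1(y_jy_{j+1})=y_jy_{j+1}$ for $2\le j\le n-1$. Then $(\mathrm{EC}_n-1)(\sigma_1(\mathrm{EC}_n)-1)=(x_1-\mathrm{EC}_{n-1}(x_2,\dots,x_n))^2$.
   Context: Let $x_1,\dots,x_n$ be algebraically independent indeterminates over $\mathbb{Q}$; in an algebraic closure fix $y_j$ with $y_j^2=1-x_j^2$. For indices $i_1<\dots<i_m$, $\mathrm{EC}_m(x_{i_1},\dots,x_{i_m})=\sum_{S\subseteq\{i_1,\dots,i_m\},\ |S|\text{ even}}(-1)^{|S|/2}\prod_{j\in S}y_j\prod_{j\notin S}x_j$, and $\mathrm{EC}_n=\mathrm{EC}_n(x_1,\dots,x_n)$. $G_n$ is the Galois group of $\mathbb{Q}(x_1,\dots,x_n,\ y_iy_j:1\le i<j\le n)$ over $\mathbb{Q}(x_1,\dots,x_n)$. *)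

theory Defs
  imports Main "HOL-Computational_Algebra.Polynomial"
begin

definition is_subfield :: "'a::field set \<Rightarrow> bool" where
  "is_subfield S \<longleftrightarrow> 0 \<in> S \<and> 1 \<in> S \<and>
     (\<forall>a\<in>S. \<forall>b\<in>S. a + b \<in> S \<and> a * b \<in> S) \<and>
     (\<forall>a\<in>S. - a \<in> S \<and> inverse a \<in> S)"

definition gen_subfield :: "'a::field set \<Rightarrow> 'a set" where
  "gen_subfield A = \<Inter> {S. is_subfield S \<and> A \<subseteq> S}"

text \<open>Automorphism group of the field L fixing the subfield K pointwise
  (the Galois group Gal(L/K)); automorphisms are represented by functions
  on the ambient type whose restriction to L is a field automorphism.\<close>
definition aut_group :: "'a::field set \<Rightarrow> 'a set \<Rightarrow> ('a \<Rightarrow> 'a) set" where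
  "aut_group L K = {\<sigma>. bij_betw \<sigma> L L \<and>
      (\<forall>a\<in>L. \<forall>b\<in>L. \<sigma> (a + b) = \<sigma> a + \<sigma> b \<and> \<sigma> (a * b) = \<sigma> a * \<sigma> b) \<and>
      (\<forall>a\<in>K. \<sigma> a = a)}"

text \<open>A polynomial is a finitely supported coefficient function on exponent
  vectors supported in I.\<close>
definition alg_indep_rat :: "(nat \<Rightarrow> 'a::field_char_0) \<Rightarrow> nat set \<Rightarrow> bool" where
  "alg_indep_rat X I \<longleftrightarrow>
     (\<forall>p :: (nat \<Rightarrow> nat) \<Rightarrow> rat.
        finite {m. p m \<noteq> 0} \<and> (\<forall>m. p m \<noteq> 0 \<longrightarrow> (\<forall>i. i \<notin> I \<longrightarrow> m i = 0)) \<and>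
        (\<Sum>m\<in>{m. p m \<noteq> 0}. of_rat (p m) * (\<Prod>i\<in>I. X i ^ m i)) = 0
        \<longrightarrow> (\<forall>m. p m = 0))"

definition EC :: "nat set \<Rightarrow> (nat \<Rightarrow> 'a::comm_ring_1) \<Rightarrow> (nat \<Rightarrow> 'a) \<Rightarrow> 'a" where
  "EC I x y = (\<Sum>S\<in>{S. S \<subseteq> I \<and> even (card S)}.
      (-1) ^ (card S div 2) * (\<Prod>j\<in>S. y j) * (\<Prod>j\<in>I - S. x j))"

end

theory Submission imports Defs begin

lemma subfield_gen: "is_subfield (gen_subfield A)"
  unfolding is_subfield_def gen_subfield_def by auto

lemma gen_sub: "A \<subseteq> gen_subfield A"
  unfolding gen_subfield_def by auto

lemma gen_mono: "A \<subseteq> B \<Longrightarrow> gen_subfield A \<subseteq> gen_subfield B"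
  unfolding gen_subfield_def by auto

lemma sf_add: "is_subfield L \<Longrightarrow> a \<in> L \<Longrightarrow> b \<in> L \<Longrightarrow> a + b \<in> L"
  unfolding is_subfield_def by blast
lemma sf_mult: "is_subfield L \<Longrightarrow> a \<in> L \<Longrightarrow> b \<in> L \<Longrightarrow> a * b \<in> L"
  unfolding is_subfield_def by blast
lemma sf_uminus: "is_subfield L \<Longrightarrow> a \<in> L \<Longrightarrow> - a \<in> L"
  unfolding is_subfield_def by blast
lemma sf_inv: "is_subfield L \<Longrightarrow> a \<in> L \<Longrightarrow> inverse a \<in> L"
  unfolding is_subfield_def by blast
lemma sf_diff: "is_subfield L \<Longrightarrow> a \<in> L \<Longrightarrow> b \<in> L \<Longrightarrow> a - b \<in> L"
  using sf_add[of L a "- b"] sf_uminus[of L b] by simp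
lemma sf_1: "is_subfield L \<Longrightarrow> 1 \<in> L"
  unfolding is_subfield_def by blast
lemma sf_0: "is_subfield L \<Longrightarrow> 0 \<in> L"
  unfolding is_subfield_def by blast

lemma sf_sum: "is_subfield L \<Longrightarrow> (\<forall>s\<in>F. f s \<in> L) \<Longrightarrow> sum f F \<in> L"
proof (induction F rule: infinite_finite_induct)
  case (infinite A) then show ?case by (simp add: is_subfield_def)
next
  case empty then show ?case by (simp add: is_subfield_def)
next
  case (insert a A) then show ?case by (simp add: is_subfield_def)
qed

lemma sf_prod: "is_subfield L \<Longrightarrow> (\<forall>s\<in>F. f s \<in> L) \<Longrightarrow> prod f F \<in> L"
proof (induction F rule: infinite_finite_induct)
  case (infinite A) then show ?case by (simp add: is_subfield_def)
next
  case empty then show ?case by (simp add: is_subfield_def)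
next
  case (insert a A) then show ?case by (simp add: is_subfield_def)
qed

lemma sf_pow: "is_subfield L \<Longrightarrow> a \<in> L \<Longrightarrow> a ^ k \<in> L"
  by (induction k) (simp_all add: is_subfield_def)

lemma hom_sum:
  assumes "is_subfield L" "\<forall>a\<in>L. \<forall>b\<in>L. \<sigma> (a + b) = \<sigma> a + \<sigma> b" "\<sigma> 0 = 0"
    "\<forall>s\<in>F. f s \<in> L" "finite F"
  shows "\<sigma> (sum f F) = (\<Sum>s\<in>F. \<sigma> (f s))"
  using assms(5,4)
proof (induction F rule: finite_induct)
  case empty then show ?case using assms by simp
next
  case (insert a A)
  have "sum f A \<in> L" using sf_sum[OF assms(1)] insert by auto
  then show ?case using insert assms(2) by simp
qed

lemma hom_prod:
  assumes "is_subfield L" "\<forall>a\<in>L. \<forall>b\<in>L. \<sigma> (a * b) = \<sigma> a * \<sigma> b" "\<sigma> 1 = 1"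
    "\<forall>s\<in>F. f s \<in> L" "finite F"
  shows "\<sigma> (prod f F) = (\<Prod>s\<in>F. \<sigma> (f s))"
  using assms(5,4)
proof (induction F rule: finite_induct)
  case empty then show ?case using assms by simp
next
  case (insert a A)
  have "prod f A \<in> L" using sf_prod[OF assms(1)] insert by auto
  then show ?case using insert assms(2) by simp
qed

lemma indep_ne:
  fixes X :: "nat \<Rightarrow> 'a::field_char_0"
  assumes ind: "alg_indep_rat X I" and k: "k \<in> I" and fin: "finite I"
  shows "X k ^ 2 \<noteq> 1"
proof
  assume h: "X k ^ 2 = 1"
  define m2 where "m2 = (\<lambda>i. if i = k then 2 else (0::nat))"
  define m0 where "m0 = (\<lambda>i::nat. (0::nat))"
  have ne: "m2 \<noteq> m0" by (metis m2_def m0_def zero_neq_numeral)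
  define p where "p = (\<lambda>m. if m = m2 then 1 else if m = m0 then -1 else (0::rat))"
  have supp: "{m. p m \<noteq> 0} = {m2, m0}" using ne by (auto simp: p_def)
  have pr2: "(\<Prod>i\<in>I. X i ^ m2 i) = X k ^ 2"
  proof -
    have "(\<Prod>i\<in>I. X i ^ m2 i) = (\<Prod>i\<in>I. if i = k then X k ^ 2 else 1)"
      by (rule prod.cong) (auto simp: m2_def)
    then show ?thesis using fin k by simp
  qed
  have "(\<Sum>m\<in>{m. p m \<noteq> 0}. of_rat (p m) * (\<Prod>i\<in>I. X i ^ m i)) = X k ^ 2 - 1"
    unfolding supp using ne pr2 by (simp add: p_def m0_def)
  also have "\<dots> = 0" using h by simp
  finally have z: "(\<Sum>m\<in>{m. p m \<noteq> 0}. of_rat (p m) * (\<Prod>i\<in>I. X i ^ m i)) = 0" .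
  have f: "finite {m. p m \<noteq> 0}" unfolding supp by simp
  have s: "\<forall>m. p m \<noteq> 0 \<longrightarrow> (\<forall>i. i \<notin> I \<longrightarrow> m i = 0)"
  proof (intro allI impI)
    fix m i assume a: "p m \<noteq> 0" "i \<notin> I"
    then have "m \<in> {m2, m0}" using supp by blast
    then show "m i = 0" using a k by (auto simp: m2_def m0_def)
  qed
  have "\<forall>m. p m = 0"
    using ind f s z unfolding alg_indep_rat_def by blast
  then show False by (metis p_def one_neq_zero)
qed

lemma ipow_sum:
  fixes i :: "'a::comm_ring_1"
  assumes i2: "i^2 = -1"
  shows "i ^ k + (-i) ^ k = (if even k then 2 * (-1) ^ (k div 2) else 0)"
proof (cases "even k")
  case True
  then obtain m where k: "k = 2*m" by (rule evenE)
  have a: "i ^ k = (-1)^m" by (simp only: k power_mult i2)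
  have b: "(-i) ^ k = (-1)^m" by (simp only: k power_mult power2_minus i2)
  have "k div 2 = m" using k by simp
  then show ?thesis using True a b by simp
next
  case False
  have "(-i) ^ k = - (i^k)" using False by (simp add: power_minus_odd)
  then show ?thesis using False by simp
qed

lemma EC_PM:
  fixes i :: "'a::comm_ring_1"
  assumes i2: "i^2 = -1" and fin: "finite I"
  shows "2 * EC I x y = (\<Prod>j\<in>I. x j + i * y j) + (\<Prod>j\<in>I. x j - i * y j)"
proof -
  have e1: "(\<Prod>j\<in>I. x j + i * y j) = (\<Sum>S\<in>Pow I. i ^ card S * (\<Prod>j\<in>S. y j) * (\<Prod>j\<in>I-S. x j))"
  proof -
    have "(\<Prod>j\<in>I. x j + i * y j) = (\<Prod>j\<in>I. i * y j + x j)" by (simp add: add.commute)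
    also have "\<dots> = (\<Sum>S\<in>Pow I. (\<Prod>j\<in>S. i * y j) * (\<Prod>j\<in>I-S. x j))" by (rule prod_add[OF fin])
    also have "\<dots> = (\<Sum>S\<in>Pow I. i ^ card S * (\<Prod>j\<in>S. y j) * (\<Prod>j\<in>I-S. x j))"
      by (rule sum.cong) (auto simp: prod.distrib)
    finally show ?thesis .
  qed
  have e2: "(\<Prod>j\<in>I. x j - i * y j) = (\<Sum>S\<in>Pow I. (-i) ^ card S * (\<Prod>j\<in>S. y j) * (\<Prod>j\<in>I-S. x j))"
  proof -
    have "(\<Prod>j\<in>I. x j - i * y j) = (\<Prod>j\<in>I. (-i) * y j + x j)" by (simp add: add.commute)
    also have "\<dots> = (\<Sum>S\<in>Pow I. (\<Prod>j\<in>S. (-i) * y j) * (\<Prod>j\<in>I-S. x j))" by (rule prod_add[OF fin])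
    also have "\<dots> = (\<Sum>S\<in>Pow I. (-i) ^ card S * (\<Prod>j\<in>S. y j) * (\<Prod>j\<in>I-S. x j))"
      by (rule sum.cong) (simp_all only: prod.distrib prod_constant)
    finally show ?thesis .
  qed
  have "(\<Prod>j\<in>I. x j + i * y j) + (\<Prod>j\<in>I. x j - i * y j)
     = (\<Sum>S\<in>Pow I. (i ^ card S + (-i) ^ card S) * (\<Prod>j\<in>S. y j) * (\<Prod>j\<in>I-S. x j))"
    unfolding e1 e2 sum.distrib[symmetric] by (rule sum.cong) (auto simp: algebra_simps)
  also have "\<dots> = (\<Sum>S\<in>Pow I. if even (card S) then 2 * ((-1) ^ (card S div 2) * (\<Prod>j\<in>S. y j) * (\<Prod>j\<in>I-S. x j)) else 0)"
    by (rule sum.cong) (auto simp: ipow_sum[OF i2])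
  also have "\<dots> = (\<Sum>S\<in>{S\<in>Pow I. even (card S)}. 2 * ((-1) ^ (card S div 2) * (\<Prod>j\<in>S. y j) * (\<Prod>j\<in>I-S. x j)))"
    by (rule sum.inter_filter[symmetric]) (simp add: fin)
  also have "\<dots> = 2 * EC I x y"
  proof -
    have "{S\<in>Pow I. even (card S)} = {S. S \<subseteq> I \<and> even (card S)}" by auto
    then show ?thesis unfolding EC_def sum_distrib_left by simp
  qed
  finally show ?thesis by simp
qed

lemma key_alg:
  fixes z w Q R :: "'a::field_char_0"
  assumes "z * w = 1" "Q * R = 1"
  shows "((z*Q + w*R)/2 - 1) * ((w*Q + z*R)/2 - 1) = ((z+w)/2 - (Q+R)/2)^2"
proof -
  have e: "4 * (((z*Q + w*R)/2 - 1) * ((w*Q + z*R)/2 - 1)) = 4 * ((z+w)/2 - (Q+R)/2)^2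
     + (z*w-1)*(Q^2+R^2-2) + (Q*R-1)*(z^2+w^2-2)"
    by (simp add: field_simps power2_eq_square)
  show ?thesis using e assms by simp
qed

theorem mainTheorem8:
  fixes x y :: "nat \<Rightarrow> 'a::{alg_closed_field, field_char_0}"
    and n :: nat and \<sigma>\<^sub>1 :: "'a \<Rightarrow> 'a"
  assumes n2: "n \<ge> 2"
    and indep: "alg_indep_rat x {1..n}"
    and ysq: "\<forall>j\<in>{1..n}. y j ^ 2 = 1 - x j ^ 2"
    and G: "\<sigma>\<^sub>1 \<in> aut_group
              (gen_subfield (x ` {1..n} \<union> {y i * y j | i j. 1 \<le> i \<and> i < j \<and> j \<le> n}))
              (gen_subfield (x ` {1..n}))"
    and s12: "\<sigma>\<^sub>1 (y 1 * y 2) = - (y 1 * y 2)"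
    and sj: "\<forall>j. 2 \<le> j \<and> j \<le> n - 1 \<longrightarrow> \<sigma>\<^sub>1 (y j * y (j + 1)) = y j * y (j + 1)"
  shows "(EC {1..n} x y - 1) * (\<sigma>\<^sub>1 (EC {1..n} x y) - 1) = (x 1 - EC {2..n} x y) ^ 2"
proof -
  define \<sigma> where "\<sigma> = \<sigma>\<^sub>1"
  define L where "L = gen_subfield (x ` {1..n} \<union> {y i * y j | i j. 1 \<le> i \<and> i < j \<and> j \<le> n})"
  define K where "K = gen_subfield (x ` {1..n})"
  have addh: "\<forall>a\<in>L. \<forall>b\<in>L. \<sigma> (a + b) = \<sigma> a + \<sigma> b"
    and mulh: "\<forall>a\<in>L. \<forall>b\<in>L. \<sigma> (a * b) = \<sigma> a * \<sigma> b"
    and fixK: "\<forall>a\<in>K. \<sigma> a = a"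
  proof -
    have "\<sigma> \<in> aut_group L K" using G by (simp only: \<sigma>_def L_def K_def)
    then have h: "bij_betw \<sigma> L L \<and>
      (\<forall>a\<in>L. \<forall>b\<in>L. \<sigma> (a + b) = \<sigma> a + \<sigma> b \<and> \<sigma> (a * b) = \<sigma> a * \<sigma> b) \<and>
      (\<forall>a\<in>K. \<sigma> a = a)" unfolding aut_group_def by (rule CollectD)
    then show "\<forall>a\<in>L. \<forall>b\<in>L. \<sigma> (a + b) = \<sigma> a + \<sigma> b" by blast
    from h show "\<forall>a\<in>L. \<forall>b\<in>L. \<sigma> (a * b) = \<sigma> a * \<sigma> b" by blast
    from h show "\<forall>a\<in>K. \<sigma> a = a" by blast
  qed
  have sfL: "is_subfield L" unfolding L_def by (rule subfield_gen)
  have sfK: "is_subfield K" unfolding K_def by (rule subfield_gen)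
  have KL: "K \<subseteq> L" unfolding K_def L_def by (rule gen_mono) auto
  have xK: "\<And>j. j \<in> {1..n} \<Longrightarrow> x j \<in> K" unfolding K_def using gen_sub by blast
  have genL: "y i * y j \<in> L" if "1 \<le> i" "i < j" "j \<le> n" for i j
  proof -
    have "y i * y j \<in> {y i * y j | i j. 1 \<le> i \<and> i < j \<and> j \<le> n}" using that by auto
    then show ?thesis unfolding L_def by (rule subsetD[OF gen_sub, OF UnI2])
  qed
  have s0: "\<sigma> 0 = 0" using fixK sfK by (simp add: is_subfield_def)
  have s1: "\<sigma> 1 = 1" using fixK sfK by (simp add: is_subfield_def)
  have yy: "\<And>j. j \<in> {1..n} \<Longrightarrow> y j * y j = 1 - x j * x j"
    using ysq by (simp add: power2_eq_square)
  have nz: "\<And>j. j \<in> {1..n} \<Longrightarrow> y j * y j \<noteq> 0"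
  proof -
    fix j assume j: "j \<in> {1..n}"
    have "x j ^ 2 \<noteq> 1" by (rule indep_ne[OF indep j]) simp
    then show "y j * y j \<noteq> 0" using yy[OF j] by (simp add: power2_eq_square)
  qed
  have yyK: "\<And>j. j \<in> {1..n} \<Longrightarrow> y j * y j \<in> K"
  proof -
    fix j assume j: "j \<in> {1..n}"
    have "1 - x j * x j \<in> K" by (intro sf_diff[OF sfK] sf_1[OF sfK] sf_mult[OF sfK] xK[OF j])
    then show "y j * y j \<in> K" using yy[OF j] by simp
  qed
  define t where "t = (\<lambda>j. y 2 * y j)"
  have n2': "2 \<in> {1..n}" using n2 by simp
  have tL: "\<And>j. j \<in> {1..n} \<Longrightarrow> t j \<in> L"
  proof -
    fix j assume j: "j \<in> {1..n}"
    show "t j \<in> L"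
    proof (cases "j = 1")
      case True then show ?thesis using genL[of 1 2] n2 by (simp add: t_def mult.commute)
    next
      case False
      show ?thesis
      proof (cases "j = 2")
        case True then show ?thesis using yyK[OF n2'] KL by (auto simp: t_def)
      next
        case False2: False
        then show ?thesis using genL[of 2 j] j False by (auto simp: t_def)
      qed
    qed
  qed
  have tfix0: "\<forall>j. 2 + d \<le> n \<longrightarrow> \<sigma> (t (2 + d)) = t (2 + d)" for d
  proof (induction d)
    case 0 show ?case using fixK yyK[OF n2'] by (simp add: t_def)
  next
    case (Suc d)
    show ?case
    proof (intro allI impI)
      fix j' assume h: "2 + Suc d \<le> n"
      define j where "j = 2 + d"
      have jn: "j \<in> {1..n}" "j + 1 \<le> n" using h by (auto simp: j_def)
      have IH: "\<sigma> (t j) = t j" using Suc h by (simp add: j_def)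
      have s: "\<sigma> (y j * y (j+1)) = y j * y (j+1)" using sj jn by (simp add: j_def \<sigma>_def)
      have id: "t (j+1) * (y j * y j) = t j * (y j * y (j+1))" by (simp add: t_def algebra_simps)
      have j1: "j + 1 \<in> {1..n}" using jn by auto
      have "\<sigma> (t (j+1)) * (y j * y j) = \<sigma> (t (j+1) * (y j * y j))"
        using mulh tL[OF j1] yyK[OF jn(1)] KL fixK by auto
      also have "\<dots> = \<sigma> (t j * (y j * y (j+1)))" by (simp only: id)
      also have "\<dots> = t j * (y j * y (j+1))"
        using mulh tL[OF jn(1)] genL[of j "j+1"] jn IH s by (auto simp: j_def)
      also have "\<dots> = t (j+1) * (y j * y j)" by (rule id[symmetric])
      finally show "\<sigma> (t (2 + Suc d)) = t (2 + Suc d)" using nz[OF jn(1)] by (simp add: j_def)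
    qed
  qed
  define e where "e = (\<lambda>j::nat. if j = 1 then -1 else (1::'a))"
  have tsig: "\<And>j. j \<in> {1..n} \<Longrightarrow> \<sigma> (t j) = e j * t j"
  proof -
    fix j assume j: "j \<in> {1..n}"
    show "\<sigma> (t j) = e j * t j"
    proof (cases "j = 1")
      case True then show ?thesis using s12 by (simp add: t_def e_def \<sigma>_def mult.commute)
    next
      case False
      then obtain d where "j = 2 + d" using j by (metis atLeastAtMost_iff le_Suc_ex le_antisym not_less_eq_eq one_add_one plus_1_eq_Suc)
      then show ?thesis using tfix0[of d] j False by (simp add: e_def)
    qed
  qed
  define y' where "y' = y(1 := - y 1)"
  have y'eq: "\<And>j. y' j = e j * y j" by (simp add: y'_def e_def)
  define c where "c = y 2 * y 2"
  have cK: "c \<in> K" and cnz: "c \<noteq> 0" using yyK[OF n2'] nz[OF n2'] by (auto simp: c_def)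
  have icK: "inverse c \<in> K" using cK sfK by (simp add: is_subfield_def)
  have prodS: "(\<Prod>j\<in>S. y j) \<in> L \<and> \<sigma> (\<Prod>j\<in>S. y j) = (\<Prod>j\<in>S. y' j)"
    if S: "S \<subseteq> {1..n}" "even (card S)" for S
  proof -
    obtain k where k: "card S = 2 * k" using S(2) by (rule evenE)
    have pt: "(\<Prod>j\<in>S. t j) = y 2 ^ card S * (\<Prod>j\<in>S. y j)"
      unfolding t_def by (rule prod.distrib[of "\<lambda>_. y 2" y S, unfolded prod_constant])
    have y2c: "y 2 ^ card S = c ^ k" unfolding k c_def power_mult power2_eq_square ..
    have e1: "(\<Prod>j\<in>S. y j) = inverse c ^ k * (\<Prod>j\<in>S. t j)"
    proof -
      have "inverse c ^ k * (\<Prod>j\<in>S. t j) = (inverse c ^ k * c ^ k) * (\<Prod>j\<in>S. y j)"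
        unfolding pt y2c by (simp only: mult.assoc)
      also have "inverse c ^ k * c ^ k = 1" using cnz by (simp add: power_mult_distrib[symmetric])
      finally show ?thesis by simp
    qed
    have ickK: "inverse c ^ k \<in> K" by (rule sf_pow[OF sfK icK])
    have ickL: "inverse c ^ k \<in> L" using ickK KL by blast
    have ptL: "(\<Prod>j\<in>S. t j) \<in> L" by (rule sf_prod[OF sfL]) (use tL S in blast)
    have memL: "(\<Prod>j\<in>S. y j) \<in> L" unfolding e1 by (rule sf_mult[OF sfL ickL ptL])
    have finS: "finite S" using S(1) finite_subset by blast
    have "\<sigma> (\<Prod>j\<in>S. y j) = \<sigma> (inverse c ^ k) * \<sigma> (\<Prod>j\<in>S. t j)"
      unfolding e1 using mulh ickL ptL by blast
    also have "\<sigma> (inverse c ^ k) = inverse c ^ k" using fixK ickK by blast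
    also have "\<sigma> (\<Prod>j\<in>S. t j) = (\<Prod>j\<in>S. \<sigma> (t j))"
      by (rule hom_prod[OF sfL mulh s1]) (use tL S finS in blast)+
    also have "\<dots> = (\<Prod>j\<in>S. e j * t j)" using tsig S by (intro prod.cong) auto
    also have "\<dots> = (\<Prod>j\<in>S. e j) * (\<Prod>j\<in>S. t j)" by (rule prod.distrib)
    finally have "\<sigma> (\<Prod>j\<in>S. y j) = (\<Prod>j\<in>S. e j) * (inverse c ^ k * (\<Prod>j\<in>S. t j))"
      by (simp only: mult_ac)
    also have "\<dots> = (\<Prod>j\<in>S. e j) * (\<Prod>j\<in>S. y j)" unfolding e1[symmetric] ..
    also have "\<dots> = (\<Prod>j\<in>S. y' j)" unfolding y'eq by (rule prod.distrib[symmetric])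
    finally show ?thesis using memL by simp
  qed
  have m1K: "(-1::'a) ^ m \<in> K" for m
    by (rule sf_pow[OF sfK sf_uminus[OF sfK sf_1[OF sfK]]])
  have pxK: "(\<Prod>j\<in>T. x j) \<in> K" if "T \<subseteq> {1..n}" for T
    by (rule sf_prod[OF sfK]) (use xK that in blast)
  define F where "F = {S. S \<subseteq> {1..n} \<and> even (card S)}"
  have finF: "finite F" unfolding F_def by (rule finite_subset[of _ "Pow {1..n}"]) auto
  define tm where "tm = (\<lambda>yy S. (-1::'a) ^ (card S div 2) * (\<Prod>j\<in>S. yy j) * (\<Prod>j\<in>{1..n} - S. x j))"
  have ECs: "\<sigma> (EC {1..n} x y) = EC {1..n} x y'"
  proof -
    have EC1: "EC {1..n} x yy = sum (tm yy) F" for yy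
      unfolding EC_def F_def tm_def ..
    have parts: "tm y S \<in> L \<and> \<sigma> (tm y S) = tm y' S" if "S \<in> F" for S
    proof -
      have S: "S \<subseteq> {1..n}" "even (card S)" using that by (auto simp: F_def)
      have a: "(-1::'a) ^ (card S div 2) \<in> L" using m1K KL by blast
      have b: "(\<Prod>j\<in>{1..n} - S. x j) \<in> L" using pxK[of "{1..n} - S"] KL by blast
      have p: "(\<Prod>j\<in>S. y j) \<in> L" using prodS[OF S] by blast
      have ab: "(-1) ^ (card S div 2) * (\<Prod>j\<in>S. y j) \<in> L" by (rule sf_mult[OF sfL a p])
      have "\<sigma> (tm y S) = \<sigma> ((-1) ^ (card S div 2) * (\<Prod>j\<in>S. y j)) * \<sigma> (\<Prod>j\<in>{1..n} - S. x j)"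
        unfolding tm_def using mulh ab b by blast
      also have "\<sigma> ((-1) ^ (card S div 2) * (\<Prod>j\<in>S. y j)) = \<sigma> ((-1) ^ (card S div 2)) * \<sigma> (\<Prod>j\<in>S. y j)"
        using mulh a p by blast
      also have "\<sigma> ((-1::'a) ^ (card S div 2)) = (-1) ^ (card S div 2)" using fixK m1K by blast
      also have "\<sigma> (\<Prod>j\<in>S. y j) = (\<Prod>j\<in>S. y' j)" using prodS[OF S] by blast
      also have "\<sigma> (\<Prod>j\<in>{1..n} - S. x j) = (\<Prod>j\<in>{1..n} - S. x j)" using fixK pxK[of "{1..n} - S"] by blast
      finally have "\<sigma> (tm y S) = tm y' S" unfolding tm_def .
      moreover have "tm y S \<in> L" unfolding tm_def by (rule sf_mult[OF sfL ab b])
      ultimately show ?thesis by blast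
    qed
    have "\<sigma> (EC {1..n} x y) = (\<Sum>S\<in>F. \<sigma> (tm y S))"
      unfolding EC1 by (rule hom_sum[OF sfL addh s0 _ finF]) (use parts in blast)
    also have "\<dots> = (\<Sum>S\<in>F. tm y' S)" by (rule sum.cong) (use parts in blast)+
    also have "\<dots> = EC {1..n} x y'" unfolding EC1 ..
    finally show ?thesis .
  qed
  obtain i :: 'a where i2: "i ^ 2 = -1" using nth_root_exists[of 2 "-1::'a"] by auto
  define Q where "Q = (\<Prod>j\<in>{2..n}. x j + i * y j)"
  define R where "R = (\<Prod>j\<in>{2..n}. x j - i * y j)"
  define z where "z = x 1 + i * y 1"
  define w where "w = x 1 - i * y 1"
  have I: "{1..n} = insert 1 {2..n}" using n2 by auto
  have n1: "(1::nat) \<notin> {2..n}" by simp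
  have E1: "2 * EC {1..n} x y = z * Q + w * R"
  proof -
    have "2 * EC {1..n} x y = (\<Prod>j\<in>{1..n}. x j + i * y j) + (\<Prod>j\<in>{1..n}. x j - i * y j)"
      by (rule EC_PM[OF i2]) simp
    also have "\<dots> = z * Q + w * R"
      unfolding I prod.insert[OF finite_atLeastAtMost n1] z_def w_def Q_def R_def ..
    finally show ?thesis .
  qed
  have Q': "(\<Prod>j\<in>{2..n}. x j + i * y' j) = Q" unfolding Q_def by (rule prod.cong) (auto simp: y'_def)
  have R': "(\<Prod>j\<in>{2..n}. x j - i * y' j) = R" unfolding R_def by (rule prod.cong) (auto simp: y'_def)
  have E2: "2 * EC {1..n} x y' = w * Q + z * R"
  proof -
    have "2 * EC {1..n} x y' = (\<Prod>j\<in>{1..n}. x j + i * y' j) + (\<Prod>j\<in>{1..n}. x j - i * y' j)"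
      by (rule EC_PM[OF i2]) simp
    also have "\<dots> = (x 1 + i * y' 1) * Q + (x 1 - i * y' 1) * R"
      unfolding I prod.insert[OF finite_atLeastAtMost n1] Q' R' ..
    also have "\<dots> = w * Q + z * R" by (simp add: y'_def z_def w_def)
    finally show ?thesis .
  qed
  have E3: "2 * EC {2..n} x y = Q + R"
    unfolding Q_def R_def by (rule EC_PM[OF i2]) simp
  have zw: "z * w = 1"
  proof -
    have "z * w = x 1 ^ 2 - i ^ 2 * y 1 ^ 2" by (simp add: z_def w_def algebra_simps power2_eq_square)
    also have "\<dots> = 1" using i2 ysq n2 by simp
    finally show ?thesis .
  qed
  have QR: "Q * R = 1"
  proof -
    have "Q * R = (\<Prod>j\<in>{2..n}. (x j + i * y j) * (x j - i * y j))"
      by (simp add: Q_def R_def prod.distrib)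
    also have "\<dots> = (\<Prod>j\<in>{2..n}. (1::'a))"
    proof (rule prod.cong)
      fix j assume j: "j \<in> {2..n}"
      have "(x j + i * y j) * (x j - i * y j) = x j ^ 2 - i ^ 2 * y j ^ 2"
        by (simp add: algebra_simps power2_eq_square)
      also have "\<dots> = 1" using i2 ysq j by simp
      finally show "(x j + i * y j) * (x j - i * y j) = 1" .
    qed simp
    finally show ?thesis by simp
  qed
  have x1: "x 1 = (z + w) / 2" by (simp add: z_def w_def)
  have a1: "EC {1..n} x y = (z * Q + w * R) / 2" using E1 by (simp add: field_simps)
  have a2: "\<sigma> (EC {1..n} x y) = (w * Q + z * R) / 2" using E2 ECs by (simp add: field_simps)
  have a3: "EC {2..n} x y = (Q + R) / 2" using E3 by (simp add: field_simps)
  show ?thesis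
    unfolding \<sigma>_def[symmetric] a2 unfolding a1 a3 x1 by (rule key_alg[OF zw QR])
qed

end
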